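(* Let $\mathbb{K}$ be a field of characteristic not $2$ or $3$ and let $\mathbb{A}$ be a commutative algebra over $\mathbb{K}$. Then $\mathbb{A}$ satisfies $(xy)^2=x^2y^2$ for all $x,y\in\mathbb{A}$ if and only if it satisfies $(xy)(zw)=(xz)(yw)$ for all $x,y,z,w\in\mathbb{A}$.
   Context: The algebra is possibly nonassociative; $x^2=xx$. *)

theory Defs
  imports Complex_Main
begin

end

theory Submission
  imports Defs
begin

lemma grp_aux:
  fixes A B C :: "'a::ab_group_add"
  assumes "A + C = B + B" "B + C = A + A"
  shows "(A - B) + (A - B) + (A - B) = 0"
proof -
  have c1: "C = B + B - A" using assms(1) by (metis add_diff_cancel_left')
  have c2: "C = A + A - B" using assms(2) by (metis add_diff_cancel_left')
  have "(A - B) + (A - B) + (A - B) = (A + A - B) - (B + B - A)" by (simp add: algebra_simps)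
  also have "\<dots> = 0" using c1 c2 by simp
  finally show ?thesis .
qed

theorem proposition3p1:
  fixes scale :: "'k::field \<Rightarrow> 'a::ab_group_add \<Rightarrow> 'a"
    and mul :: "'a \<Rightarrow> 'a \<Rightarrow> 'a"
  assumes vs: "vector_space scale"
    and char2: "(2::'k) \<noteq> 0"
    and char3: "(3::'k) \<noteq> 0"
    and add_left: "\<And>x y z. mul (x + y) z = mul x z + mul y z"
    and scale_left: "\<And>c x y. mul (scale c x) y = scale c (mul x y)"
    and comm: "\<And>x y. mul x y = mul y x"
  shows "(\<forall>x y. mul (mul x y) (mul x y) = mul (mul x x) (mul y y)) \<longleftrightarrow>
         (\<forall>x y z w. mul (mul x y) (mul z w) = mul (mul x z) (mul y w))"
proof
  assume "\<forall>x y z w. mul (mul x y) (mul z w) = mul (mul x z) (mul y w)"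
  then show "\<forall>x y. mul (mul x y) (mul x y) = mul (mul x x) (mul y y)" by blast
next
  assume H: "\<forall>x y. mul (mul x y) (mul x y) = mul (mul x x) (mul y y)"
  interpret V: vector_space scale by (rule vs)
  have add_right: "\<And>x y z. mul x (y + z) = mul x y + mul x z"
    by (metis comm add_left)
  have sc: "\<And>c (v::'a). scale c v = 0 \<Longrightarrow> c \<noteq> 0 \<Longrightarrow> v = 0"
  proof -
    fix c and v :: 'a assume a: "scale c v = 0" "c \<noteq> (0::'k)"
    have "v = scale (inverse c * c) v" using a(2) V.scale_one by simp
    also have "\<dots> = scale (inverse c) (scale c v)" using V.scale_scale by metis
    also have "\<dots> = 0" using a(1) V.scale_zero_right by simp
    finally show "v = 0" .
  qed
  have two: "\<And>v::'a. v + v = 0 \<Longrightarrow> v = 0"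
  proof -
    fix v :: 'a assume "v + v = 0"
    moreover have "scale 2 v = v + v"
      using V.scale_left_distrib[ of 1 1 v] V.scale_one
      by (simp add: one_add_one)
    ultimately show "v = 0" using sc char2 by metis
  qed
  have three: "\<And>v::'a. v + v + v = 0 \<Longrightarrow> v = 0"
  proof -
    fix v :: 'a assume "v + v + v = 0"
    moreover have "scale 3 v = v + v + v"
      using V.scale_left_distrib[ of 2 1 v]
        V.scale_left_distrib[ of 1 1 v] V.scale_one
      by (metis numeral_Bit1 numeral_One one_add_one numeral_plus_one)
    ultimately show "v = 0" using sc char3 by metis
  qed
  have L1: "mul (mul x y) (mul x' y) = mul (mul x x') (mul y y)" for x x' y
  proof -
    have e: "mul (mul (x+x') y) (mul (x+x') y) = mul (mul (x+x') (x+x')) (mul y y)" using H by blast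
    have "mul x' x = mul x x'" "mul (mul x' y) (mul x y) = mul (mul x y) (mul x' y)" using comm by blast+
    then have "(mul (mul x y) (mul x' y) - mul (mul x x') (mul y y)) + (mul (mul x y) (mul x' y) - mul (mul x x') (mul y y)) = 0"
      using e H add_left add_right by (simp add: algebra_simps)
    then show ?thesis using two by (metis eq_iff_diff_eq_0)
  qed
  have L2: "mul (mul a b) (mul c d) + mul (mul a d) (mul c b) = mul (mul a c) (mul b d) + mul (mul a c) (mul b d)" for a b c d
  proof -
    have e: "mul (mul a (b+d)) (mul c (b+d)) = mul (mul a c) (mul (b+d) (b+d))" using L1 by blast
    have "mul d b = mul b d" using comm by blast
    moreover have "mul (mul a b) (mul c b) = mul (mul a c) (mul b b)" "mul (mul a d) (mul c d) = mul (mul a c) (mul d d)" using L1 by blast+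
    ultimately show ?thesis using e add_left add_right by (simp add: algebra_simps)
  qed
  show "\<forall>x y z w. mul (mul x y) (mul z w) = mul (mul x z) (mul y w)"
  proof (intro allI)
    fix a b c d
    let ?A = "mul (mul a b) (mul c d)" and ?B = "mul (mul a c) (mul b d)" and ?C = "mul (mul a d) (mul c b)"
    have 1: "?A + ?C = ?B + ?B" by (rule L2)
    have 2: "?B + ?C = ?A + ?A" using L2[of a c b d] comm by metis
    have "(?A - ?B) + (?A - ?B) + (?A - ?B) = 0" using 1 2 by (rule grp_aux)
    then show "?A = ?B" using three by (metis eq_iff_diff_eq_0)
  qed
qed

end
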